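(* Let $\kappa\in\mathbb{N}$, $\eta\in\{2,3,\ldots\}\cup\{\infty\}$ and let $\pmb{\lambda}=\{\lambda_{-k}\}_{k=0}^{\kappa-1}\cup\{\lambda_{i,j}\}_{i,j=1}^{\eta,\infty}\subset(0,\infty)$ with $\lambda_{i,j}>1$ for $i\in\mathbb{N}\cap[1,\eta]$, $j\ge2$. If the weighted shift $S_{\pmb{\lambda}}\in\mathbf{B}(\ell^2(V_{\eta,\kappa}))$ is completely hyperexpansive and $r$-generation flat for some $r\ge3$, then $S_{\pmb{\lambda}}$ is $2$-generation flat.
   Context: $\mathcal{T}_{\eta,\kappa}$ is the directed tree with vertices $V_{\eta,\kappa}=\{-k:k\in\mathbb{N}\cap[0,\kappa]\}\sqcup\{(i,j):i\in\mathbb{N}\cap[1,\eta],j\ge1\}$ and edges $(-k,-k+1)$ ($1\le k\le\kappa$), $(0,(i,1))$, $((i,j),(i,j+1))$; the weighted shift with weights $\pmb{\lambda}$ is the bounded operator $S_{\pmb{\lambda}}e_v=\sum_{u\text{ child of }v}\lambda_ue_u$ (weight $\lambda_{-k}$ sits at vertex $-k$, $\lambda_{i,j}$ at $(i,j)$). $S_{\pmb{\lambda}}$ is $r$-generation flat if $\lambda_{i,j}=\lambda_{1,j}$ for all $j\ge r$ and $i\in\mathbb{N}\cap[1,\eta]$. A real sequence $(a_k)_{k\ge0}$ is completely alternating if $\sum_{k=0}^n(-1)^k\binom nk a_{k+m}\le0$ for all $m\ge0,n\ge1$; an operator $T$ is completely hyperexpansive if $(\|T^nf\|^2)_{n\ge0}$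 is completely alternating for every vector $f$. *)

theory Defs
  imports "HOL-Analysis.Analysis" "HOL-Library.Extended_Nat"
begin

text \<open>Vertices of the directed tree T_{eta,kappa}: Neg k stands for the vertex -k,
  Br i j stands for the vertex (i,j).\<close>
datatype vtx = Neg nat | Br nat nat

definition tree_verts :: "enat \<Rightarrow> nat \<Rightarrow> vtx set" where
  "tree_verts \<eta> \<kappa> = {Neg k | k. k \<le> \<kappa>} \<union> {Br i j | i j. 1 \<le> i \<and> enat i \<le> \<eta> \<and> 1 \<le> j}"

text \<open>Parent map (only meaningful on non-root vertices; the root is Neg kappa).\<close>
fun parent :: "vtx \<Rightarrow> vtx" where
  "parent (Neg k) = Neg (Suc k)"
| "parent (Br i 0) = Br i 0"
| "parent (Br i (Suc 0)) = Neg 0"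
| "parent (Br i (Suc (Suc j))) = Br i (Suc j)"

definition l2 :: "vtx set \<Rightarrow> (vtx \<Rightarrow> complex) set" where
  "l2 V = {f. (\<forall>v. v \<notin> V \<longrightarrow> f v = 0) \<and> (\<lambda>v. (cmod (f v))\<^sup>2) summable_on V}"

definition l2_norm_sq :: "vtx set \<Rightarrow> (vtx \<Rightarrow> complex) \<Rightarrow> real" where
  "l2_norm_sq V f = infsum (\<lambda>v. (cmod (f v))\<^sup>2) V"

text \<open>Weighted shift: (S f)(v) = lambda_v f(parent v) for non-root v, i.e.
  S e_w = sum over children u of w of lambda_u e_u.\<close>
definition wshift :: "enat \<Rightarrow> nat \<Rightarrow> (vtx \<Rightarrow> real) \<Rightarrow> (vtx \<Rightarrow> complex) \<Rightarrow> (vtx \<Rightarrow> complex)" where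
  "wshift \<eta> \<kappa> lam f = (\<lambda>v. if v \<in> tree_verts \<eta> \<kappa> \<and> v \<noteq> Neg \<kappa>
                              then complex_of_real (lam v) * f (parent v) else 0)"

definition wshift_bounded :: "enat \<Rightarrow> nat \<Rightarrow> (vtx \<Rightarrow> real) \<Rightarrow> bool" where
  "wshift_bounded \<eta> \<kappa> lam \<longleftrightarrow> (\<exists>C. \<forall>f \<in> l2 (tree_verts \<eta> \<kappa>).
      wshift \<eta> \<kappa> lam f \<in> l2 (tree_verts \<eta> \<kappa>) \<and>
      l2_norm_sq (tree_verts \<eta> \<kappa>) (wshift \<eta> \<kappa> lam f) \<le> C * l2_norm_sq (tree_verts \<eta> \<kappa>) f)"

definition completely_alternating :: "(nat \<Rightarrow> real) \<Rightarrow> bool" where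
  "completely_alternating a \<longleftrightarrow>
     (\<forall>m n. n \<ge> 1 \<longrightarrow> (\<Sum>k\<le>n. (-1)^k * real (n choose k) * a (k + m)) \<le> 0)"

definition completely_hyperexpansive :: "enat \<Rightarrow> nat \<Rightarrow> (vtx \<Rightarrow> real) \<Rightarrow> bool" where
  "completely_hyperexpansive \<eta> \<kappa> lam \<longleftrightarrow>
     (\<forall>f \<in> l2 (tree_verts \<eta> \<kappa>).
        completely_alternating (\<lambda>n. l2_norm_sq (tree_verts \<eta> \<kappa>) ((wshift \<eta> \<kappa> lam ^^ n) f)))"

definition generation_flat :: "enat \<Rightarrow> (vtx \<Rightarrow> real) \<Rightarrow> nat \<Rightarrow> bool" where
  "generation_flat \<eta> lam r \<longleftrightarrow>
     (\<forall>i j. 1 \<le> i \<and> enat i \<le> \<eta> \<and> j \<ge> r \<longrightarrow> lam (Br i j) = lam (Br 1 j))"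

end

theory Submission imports Defs begin

definition Tq :: "(nat \<Rightarrow> real) \<Rightarrow> nat \<Rightarrow> nat \<Rightarrow> real" where
  "Tq a k m = - (\<Sum>j\<le>Suc k. (-1)^j * real (Suc k choose j) * a (j + m))"

lemma F_rec:
  "(\<Sum>j\<le>Suc n. (-1)^j * real (Suc n choose j) * a (j + m)) =
   (\<Sum>j\<le>n. (-1)^j * real (n choose j) * a (j + m)) - (\<Sum>j\<le>n. (-1)^j * real (n choose j) * a (j + Suc m))"
proof -
  have "(\<Sum>j\<le>Suc n. (-1)^j * real (Suc n choose j) * a (j + m)) =
     a m + (\<Sum>j\<le>n. (-1)^(Suc j) * real (Suc n choose Suc j) * a (Suc j + m))"
    by (subst sum.atMost_Suc_shift) simp
  also have "\<dots> = a m + (\<Sum>j\<le>n. (-1)^(Suc j) * real (n choose Suc j) * a (Suc j + m))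
       - (\<Sum>j\<le>n. (-1)^j * real (n choose j) * a (j + Suc m))"
    by (simp add: sum.distrib algebra_simps sum_subtractf sum_negf)
  also have "a m + (\<Sum>j\<le>n. (-1)^(Suc j) * real (n choose Suc j) * a (Suc j + m))
     = (\<Sum>j\<le>Suc n. (-1)^j * real (n choose j) * a (j + m))"
    by (subst sum.atMost_Suc_shift) simp
  also have "\<dots> = (\<Sum>j\<le>n. (-1)^j * real (n choose j) * a (j + m))"
    by simp
  finally show ?thesis .
qed

lemma Tq_rec: "Tq a k m - Tq a (Suc k) m = Tq a k (Suc m)"
  unfolding Tq_def using F_rec[of "Suc k" a m] by simp

lemma Tq_nonneg: assumes "completely_alternating a" shows "Tq a k m \<ge> 0"
proof -
  have "(\<Sum>j\<le>Suc k. (-1)^j * real (Suc k choose j) * a (j + m)) \<le> 0"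
    using assms[unfolded completely_alternating_def, rule_format, of "Suc k" m] by (simp del: sum.atMost_Suc)
  then show ?thesis unfolding Tq_def by linarith
qed

lemma Tq_conv: assumes "completely_alternating a" shows "convergent (\<lambda>k. Tq a k m)"
proof (induction m)
  case 0
  have "decseq (\<lambda>k. Tq a k 0)"
  proof (rule decseq_SucI)
    fix n show "Tq a (Suc n) 0 \<le> Tq a n 0"
      using Tq_rec[of a n 0] Tq_nonneg[OF assms, of n 1] by simp
  qed
  then obtain L where "(\<lambda>k. Tq a k 0) \<longlonglongrightarrow> L"
    using decseq_convergent[of "\<lambda>k. Tq a k 0" 0] Tq_nonneg[OF assms] by blast
  then show ?case by (auto simp: convergent_def)
next
  case (Suc m)
  then obtain L where L: "(\<lambda>k. Tq a k m) \<longlonglongrightarrow> L" by (auto simp: convergent_def)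
  have "(\<lambda>k. Tq a k m - Tq a (Suc k) m) \<longlonglongrightarrow> L - L"
    by (intro tendsto_diff L LIMSEQ_Suc[OF L])
  then show ?case using Tq_rec[of a _ m] by (auto simp: convergent_def)
qed

lemma Tq_lim_Suc: assumes "completely_alternating a" shows "(\<lambda>k. Tq a k (Suc m)) \<longlonglongrightarrow> 0"
proof -
  obtain L where L: "(\<lambda>k. Tq a k m) \<longlonglongrightarrow> L" using Tq_conv[OF assms] by (auto simp: convergent_def)
  have "(\<lambda>k. Tq a k m - Tq a (Suc k) m) \<longlonglongrightarrow> L - L"
    by (intro tendsto_diff L LIMSEQ_Suc[OF L])
  then show ?thesis using Tq_rec[of a _ m] by simp
qed

lemma Tq_lin: "Tq (\<lambda>n. x n - C * y n) k m = Tq x k m - C * Tq y k m"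
  unfolding Tq_def by (simp add: algebra_simps sum_subtractf sum_distrib_left)

lemma evzero:
  assumes lim: "\<And>m. (\<lambda>k. Tq u k m) \<longlonglongrightarrow> 0" and ev: "\<And>n. n \<ge> N \<Longrightarrow> u n = 0"
  shows "u n = 0"
proof -
  have "\<forall>n. n + d \<ge> N \<longrightarrow> u n = 0" for d
  proof (induction d)
    case 0 then show ?case using ev by simp
  next
    case (Suc d)
    show ?case
    proof (intro allI impI)
      fix n assume "N \<le> n + Suc d"
      then have z: "u (Suc (j + n)) = 0" for j using Suc by auto
      have "Tq u k n = - u n" for k
        unfolding Tq_def by (subst sum.atMost_Suc_shift) (simp add: z del: binomial_Suc_Suc sum.atMost_Suc)
      then have "(\<lambda>k. - u n) \<longlonglongrightarrow> 0" using lim[of n] by simp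
      then show "u n = 0" by (simp add: LIMSEQ_const_iff)
    qed
  qed
  from this[of N] show ?thesis by simp
qed

lemma has_sum_sum_fin:
  fixes f :: "nat \<Rightarrow> 'a \<Rightarrow> real"
  assumes "finite J" "\<And>j. j \<in> J \<Longrightarrow> (f j has_sum s j) A"
  shows "((\<lambda>x. \<Sum>j\<in>J. f j x) has_sum (\<Sum>j\<in>J. s j)) A"
  using assms
proof (induction J rule: finite_induct)
  case empty then show ?case by simp
next
  case (insert j J)
  then show ?case by (simp add: has_sum_add)
qed

lemma step1:
  assumes sCA: "completely_alternating s"
    and hs: "\<And>j. ((\<lambda>i. c i * A i j) has_sum s (Suc j)) I"
    and ACA: "\<And>i. i \<in> I \<Longrightarrow> completely_alternating (A i)"
    and cpos: "\<And>i. i \<in> I \<Longrightarrow> c i > 0"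
    and i: "i \<in> I"
  shows "(\<lambda>k. Tq (A i) k 0) \<longlonglongrightarrow> 0"
proof -
  have hk: "((\<lambda>i. c i * Tq (A i) k 0) has_sum Tq s k 1) I" for k
  proof -
    have "((\<lambda>i. \<Sum>j\<le>Suc k. ((-1)^j * real (Suc k choose j)) * (c i * A i j)) has_sum
       (\<Sum>j\<le>Suc k. ((-1)^j * real (Suc k choose j)) * s (Suc j))) I"
      by (intro has_sum_sum_fin has_sum_cmult_right hs) simp
    then have "((\<lambda>i. - (\<Sum>j\<le>Suc k. ((-1)^j * real (Suc k choose j)) * (c i * A i j))) has_sum
       - (\<Sum>j\<le>Suc k. ((-1)^j * real (Suc k choose j)) * s (Suc j))) I"
      by (rule has_sum_uminusI)
    moreover have e1: "c i * Tq (A i) k 0 = - (\<Sum>j\<le>Suc k. ((-1)^j * real (Suc k choose j)) * (c i * A i j))" for i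
      unfolding Tq_def by (simp add: sum_distrib_left algebra_simps del: sum.atMost_Suc)
    moreover have e2: "Tq s k 1 = - (\<Sum>j\<le>Suc k. ((-1)^j * real (Suc k choose j)) * s (Suc j))"
      unfolding Tq_def by (simp add: algebra_simps del: sum.atMost_Suc)
    ultimately show ?thesis by (simp only: e1 e2)
  qed
  have le: "c i * Tq (A i) k 0 \<le> Tq s k 1" for k
  proof -
    have "\<And>x. x \<in> I \<Longrightarrow> 0 \<le> c x * Tq (A x) k 0"
      using cpos ACA Tq_nonneg by (meson mult_nonneg_nonneg less_imp_le)
    then have "sum (\<lambda>i. c i * Tq (A i) k 0) {i} \<le> Tq s k 1"
      by (intro finite_sum_le_has_sum[OF hk[of k]]) (use i in auto)
    then show ?thesis by simp
  qed
  have ge: "0 \<le> c i * Tq (A i) k 0" for k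
    using cpos[OF i] Tq_nonneg[OF ACA[OF i]] by simp
  have "(\<lambda>k. c i * Tq (A i) k 0) \<longlonglongrightarrow> 0"
  proof (rule tendsto_sandwich[OF _ _ tendsto_const])
    show "(\<lambda>k. Tq s k 1) \<longlonglongrightarrow> 0" using Tq_lim_Suc[OF sCA, of 0] by simp
    show "\<forall>\<^sub>F k in sequentially. 0 \<le> c i * Tq (A i) k 0"
      by (rule always_eventually) (rule allI, rule ge)
    show "\<forall>\<^sub>F k in sequentially. c i * Tq (A i) k 0 \<le> Tq s k 1"
      by (rule always_eventually) (rule allI, rule le)
  qed
  then have "(\<lambda>k. (c i * Tq (A i) k 0) * inverse (c i)) \<longlonglongrightarrow> 0 * inverse (c i)"
    by (rule tendsto_mult_right)
  then show ?thesis using cpos[OF i] by simp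
qed

lemma step2:
  assumes CAi: "completely_alternating x" and CA1: "completely_alternating y"
    and li: "(\<lambda>k. Tq x k 0) \<longlonglongrightarrow> 0" and l1: "(\<lambda>k. Tq y k 0) \<longlonglongrightarrow> 0"
    and x0: "x 0 = 1" and y0: "y 0 = 1"
    and ev: "\<And>n. n \<ge> N \<Longrightarrow> x n = C * y n"
  shows "x n = y n"
proof -
  let ?u = "\<lambda>n. x n - C * y n"
  have "(\<lambda>k. Tq ?u k m) \<longlonglongrightarrow> 0" for m
  proof (cases m)
    case 0
    have "(\<lambda>k. Tq x k 0 - C * Tq y k 0) \<longlonglongrightarrow> 0 - C * 0"
      by (intro tendsto_intros li l1)
    then show ?thesis using 0 by (simp add: Tq_lin)
  next
    case (Suc m')
    have "(\<lambda>k. Tq x k m - C * Tq y k m) \<longlonglongrightarrow> 0 - C * 0"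
      unfolding Suc by (intro tendsto_intros Tq_lim_Suc CAi CA1)
    then show ?thesis by (simp add: Tq_lin)
  qed
  then have u: "?u n = 0" for n by (rule evzero[of _ N]) (simp add: ev)
  from u[of 0] x0 y0 have "C = 1" by simp
  with u[of n] show ?thesis by simp
qed


lemma Br_in_iff: "Br i j \<in> tree_verts \<eta> \<kappa> \<longleftrightarrow> 1 \<le> i \<and> enat i \<le> \<eta> \<and> 1 \<le> j"
  unfolding tree_verts_def by auto

lemma Neg_in_iff: "Neg k \<in> tree_verts \<eta> \<kappa> \<longleftrightarrow> k \<le> \<kappa>"
  unfolding tree_verts_def by auto

lemma vtx_cases3:
  obtains k where "w = Neg k" | i where "w = Br i 0" | i where "w = Br i (Suc 0)"
    | i a where "w = Br i (Suc (Suc a))"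
  by (metis vtx.exhaust not0_implies_Suc)

lemma iter_br:
  assumes "1 \<le> i" "enat i \<le> \<eta>"
  shows "(wshift \<eta> \<kappa> lam ^^ n) (\<lambda>w. if w = Br i 1 then 1 else 0) =
    (\<lambda>w. if w = Br i (Suc n) then complex_of_real (\<Prod>l\<in>{2..Suc n}. lam (Br i l)) else 0)"
proof (induction n)
  case 0
  have e: "{2..Suc 0::nat} = {}" by auto
  show ?case by (simp only: e prod.empty funpow_0 One_nat_def of_real_1)
next
  case (Suc n)
  have eq: "(wshift \<eta> \<kappa> lam ^^ Suc n) (\<lambda>w. if w = Br i 1 then 1 else 0)
     = wshift \<eta> \<kappa> lam ((wshift \<eta> \<kappa> lam ^^ n) (\<lambda>w. if w = Br i 1 then 1 else 0))" by simp
  show ?case unfolding eq Suc.IH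
    apply (rule ext)
    subgoal for w
      by (rule vtx_cases3[of w]) (use assms in \<open>auto simp add: wshift_def Br_in_iff\<close>)
    done
qed

lemma iter_0:
  "(wshift \<eta> \<kappa> lam ^^ Suc n) (\<lambda>w. if w = Neg 0 then 1 else 0) =
    (\<lambda>w. case w of Neg k \<Rightarrow> 0 | Br i j \<Rightarrow> if j = Suc n \<and> 1 \<le> i \<and> enat i \<le> \<eta>
        then complex_of_real (\<Prod>l\<in>{1..Suc n}. lam (Br i l)) else 0)"
proof (induction n)
  case 0
  show ?case
    apply (rule ext)
    subgoal for w
      by (rule vtx_cases3[of w]) (auto simp add: wshift_def Br_in_iff)
    done
next
  case (Suc n)
  have eq: "(wshift \<eta> \<kappa> lam ^^ Suc (Suc n)) (\<lambda>w. if w = Neg 0 then 1 else 0)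
     = wshift \<eta> \<kappa> lam ((wshift \<eta> \<kappa> lam ^^ Suc n) (\<lambda>w. if w = Neg 0 then 1 else 0))" by simp
  show ?case unfolding eq Suc.IH
    apply (rule ext)
    subgoal for w
      by (rule vtx_cases3[of w]) (auto simp add: wshift_def Br_in_iff)
    done
qed


lemma l2_iter:
  assumes "wshift_bounded \<eta> \<kappa> lam" "f \<in> l2 (tree_verts \<eta> \<kappa>)"
  shows "(wshift \<eta> \<kappa> lam ^^ n) f \<in> l2 (tree_verts \<eta> \<kappa>)"
proof (induction n)
  case 0 then show ?case using assms(2) by simp
next
  case (Suc n)
  from assms(1) obtain C where "\<forall>f \<in> l2 (tree_verts \<eta> \<kappa>). wshift \<eta> \<kappa> lam f \<in> l2 (tree_verts \<eta> \<kappa>)"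
    unfolding wshift_bounded_def by blast
  with Suc show ?case by simp
qed

lemma single_has_sum:
  assumes "p \<in> V"
  shows "((\<lambda>v. (cmod (if v = p then c else 0))\<^sup>2) has_sum (cmod c)\<^sup>2) V"
  by (rule has_sum_finite_neutralI[of "{p}"]) (use assms in auto)

lemma single_l2:
  assumes "p \<in> V"
  shows "(\<lambda>w. if w = p then c else 0) \<in> l2 V"
    and "l2_norm_sq V (\<lambda>w. if w = p then c else 0) = (cmod c)\<^sup>2"
  using single_has_sum[OF assms, of c] assms unfolding l2_def l2_norm_sq_def
  by (auto dest: has_sum_imp_summable simp: has_sum_iff)

definition Aq :: "(vtx \<Rightarrow> real) \<Rightarrow> nat \<Rightarrow> nat \<Rightarrow> real" where
  "Aq lam i n = (\<Prod>l\<in>{2..Suc n}. lam (Br i l))\<^sup>2"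

lemma Aq_0: "Aq lam i 0 = 1"
proof -
  have e: "{2..Suc 0::nat} = {}" by auto
  show ?thesis unfolding Aq_def by (simp only: e prod.empty) simp
qed

lemma Aq_Suc: "Aq lam i (Suc n) = Aq lam i n * (lam (Br i (Suc (Suc n))))\<^sup>2"
  unfolding Aq_def by (simp add: power_mult_distrib)

lemma norm_br:
  assumes "1 \<le> i" "enat i \<le> \<eta>"
  shows "l2_norm_sq (tree_verts \<eta> \<kappa>) ((wshift \<eta> \<kappa> lam ^^ n) (\<lambda>w. if w = Br i 1 then 1 else 0)) = Aq lam i n"
proof -
  have "Br i (Suc n) \<in> tree_verts \<eta> \<kappa>" using assms by (simp add: Br_in_iff)
  then show ?thesis unfolding iter_br[OF assms] Aq_def
    by (simp add: single_l2(2) power2_abs)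
qed

lemma has_sum_vert0:
  fixes \<eta> :: enat and \<kappa> :: nat and lam :: "vtx \<Rightarrow> real" and I :: "nat set"
  defines "I \<equiv> {i. 1 \<le> i \<and> enat i \<le> \<eta>}"
  assumes bdd: "wshift_bounded \<eta> \<kappa> lam"
  shows "((\<lambda>i. (lam (Br i 1))\<^sup>2 * Aq lam i j) has_sum
      l2_norm_sq (tree_verts \<eta> \<kappa>) ((wshift \<eta> \<kappa> lam ^^ Suc j) (\<lambda>w. if w = Neg 0 then 1 else 0))) I"
proof -
  let ?V = "tree_verts \<eta> \<kappa>"
  let ?g = "(wshift \<eta> \<kappa> lam ^^ Suc j) (\<lambda>w. if w = Neg 0 then 1 else 0)"
  let ?h = "\<lambda>v. (cmod (?g v))\<^sup>2"
  let ?B = "\<lambda>i. Br i (Suc j)"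
  have "(\<lambda>w. if w = Neg 0 then 1 else 0) \<in> l2 ?V"
    by (rule single_l2(1)) (simp add: Neg_in_iff)
  then have "?g \<in> l2 ?V" by (rule l2_iter[OF bdd])
  then have "(?h has_sum l2_norm_sq ?V ?g) ?V"
    unfolding l2_def l2_norm_sq_def by (simp add: summable_iff_has_sum_infsum)
  also have "?this \<longleftrightarrow> (?h has_sum l2_norm_sq ?V ?g) (?B ` I)"
  proof (rule has_sum_cong_neutral)
    fix x assume "x \<in> ?B ` I - ?V" then show "?h x = 0" unfolding I_def by (auto simp: Br_in_iff)
  next
    fix x assume x: "x \<in> ?V - ?B ` I"
    show "?h x = 0"
    proof (cases x)
      case (Neg k) then show ?thesis unfolding iter_0 by simp
    next
      case (Br i j')
      then show ?thesis using x unfolding iter_0 I_def by auto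
    qed
  qed simp
  also have "\<dots> \<longleftrightarrow> ((?h \<circ> ?B) has_sum l2_norm_sq ?V ?g) I"
    by (rule has_sum_reindex) (auto simp: inj_on_def)
  also have "\<dots> \<longleftrightarrow> ((\<lambda>i. (lam (Br i 1))\<^sup>2 * Aq lam i j) has_sum l2_norm_sq ?V ?g) I"
  proof (rule has_sum_cong)
    fix i assume "i \<in> I"
    then have "?g (?B i) = complex_of_real (\<Prod>l\<in>{1..Suc j}. lam (Br i l))"
      unfolding iter_0 I_def by simp
    then have "(?h \<circ> ?B) i = (\<Prod>l\<in>{1..Suc j}. lam (Br i l))\<^sup>2"
      by (simp only: comp_def norm_of_real power2_abs)
    also have "\<dots> = (lam (Br i 1))\<^sup>2 * Aq lam i j"
      unfolding Aq_def by (simp add: prod.atLeast_Suc_atMost power_mult_distrib numeral_2_eq_2)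
    finally show "(?h \<circ> ?B) i = (lam (Br i 1))\<^sup>2 * Aq lam i j" .
  qed
  finally show ?thesis .
qed


theorem theorem9p3:
  fixes \<kappa> :: nat and \<eta> :: enat and lam :: "vtx \<Rightarrow> real" and r :: nat
  assumes eta: "\<eta> \<ge> 2"
    and pos_neg: "\<And>k. k < \<kappa> \<Longrightarrow> lam (Neg k) > 0"
    and pos_br: "\<And>i j. 1 \<le> i \<Longrightarrow> enat i \<le> \<eta> \<Longrightarrow> 1 \<le> j \<Longrightarrow> lam (Br i j) > 0"
    and gt1: "\<And>i j. 1 \<le> i \<Longrightarrow> enat i \<le> \<eta> \<Longrightarrow> 2 \<le> j \<Longrightarrow> lam (Br i j) > 1"
    and bdd: "wshift_bounded \<eta> \<kappa> lam"
    and CH: "completely_hyperexpansive \<eta> \<kappa> lam"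
    and r: "r \<ge> 3"
    and flat: "generation_flat \<eta> lam r"
  shows "generation_flat \<eta> lam 2"
proof -
  define I where "I = {i. 1 \<le> i \<and> enat i \<le> \<eta>}"
  let ?V = "tree_verts \<eta> \<kappa>"
  let ?W = "wshift \<eta> \<kappa> lam"
  define s where "s n = l2_norm_sq ?V ((?W ^^ n) (\<lambda>w. if w = Neg 0 then 1 else 0))" for n
  have one_le: "enat 1 \<le> \<eta>"
    using eta by (metis enat_ord_simps(1) one_le_numeral order_trans numeral_eq_enat)
  have oneI: "1 \<in> I" unfolding I_def using one_le by simp
  have "(\<lambda>w. if w = Neg 0 then 1 else 0) \<in> l2 ?V"
    by (rule single_l2(1)) (simp add: Neg_in_iff)
  then have sCA: "completely_alternating s"
    using CH unfolding completely_hyperexpansive_def s_def by blast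
  have ACA: "completely_alternating (Aq lam i)" if "i \<in> I" for i
  proof -
    have i: "1 \<le> i" "enat i \<le> \<eta>" using that unfolding I_def by auto
    have "(\<lambda>w. if w = Br i 1 then 1 else 0) \<in> l2 ?V"
      by (rule single_l2(1)) (use i in \<open>simp add: Br_in_iff\<close>)
    then have "completely_alternating (\<lambda>n. l2_norm_sq ?V ((?W ^^ n) (\<lambda>w. if w = Br i 1 then 1 else 0)))"
      using CH unfolding completely_hyperexpansive_def by blast
    then show ?thesis using norm_br[OF i, where \<kappa>=\<kappa> and lam=lam] by simp
  qed
  have hs: "((\<lambda>i. (lam (Br i 1))\<^sup>2 * Aq lam i j) has_sum s (Suc j)) I" for j
    unfolding s_def I_def by (rule has_sum_vert0[OF bdd])
  have cpos: "(lam (Br i 1))\<^sup>2 > 0" if "i \<in> I" for i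
    using pos_br[of i 1] that unfolding I_def by simp
  have lim: "(\<lambda>k. Tq (Aq lam i) k 0) \<longlonglongrightarrow> 0" if "i \<in> I" for i
    by (rule step1[OF sCA hs ACA cpos that])
  have Apos: "Aq lam i n > 0" if "i \<in> I" for i n
  proof -
    have "\<forall>l\<in>{2..Suc n}. 0 < lam (Br i l)"
    proof
      fix l assume "l \<in> {2..Suc n}"
      then have "1 \<le> l" by simp
      then show "0 < lam (Br i l)" using pos_br[of i l] that unfolding I_def by simp
    qed
    then have "(\<Prod>l\<in>{2..Suc n}. lam (Br i l)) > 0" by (intro prod_pos) blast
    then show ?thesis unfolding Aq_def by simp
  qed
  have Aeq: "Aq lam i n = Aq lam 1 n" if i: "i \<in> I" for i n
  proof -
    define N where "N = r - 2"
    define C where "C = Aq lam i N / Aq lam 1 N"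
    have ev: "Aq lam i n = C * Aq lam 1 n" if "n \<ge> N" for n
      using that
    proof (induction n rule: dec_induct)
      case base then show ?case unfolding C_def using Apos[OF oneI, of N] by simp
    next
      case (step n)
      have "lam (Br i (Suc (Suc n))) = lam (Br 1 (Suc (Suc n)))"
        using flat i step(1) unfolding generation_flat_def I_def N_def by auto
      then show ?case using step(3) by (simp add: Aq_Suc)
    qed
    show ?thesis
      by (rule step2[OF ACA[OF i] ACA[OF oneI] lim[OF i] lim[OF oneI] Aq_0 Aq_0 ev])
  qed
  show ?thesis unfolding generation_flat_def
  proof (intro allI impI)
    fix i j :: nat assume h: "1 \<le> i \<and> enat i \<le> \<eta> \<and> 2 \<le> j"
    then have i: "i \<in> I" unfolding I_def by simp
    obtain n where j: "j = Suc (Suc n)" using h by (metis add_2_eq_Suc le_Suc_ex)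
    have "Aq lam i n * (lam (Br i j))\<^sup>2 = Aq lam i n * (lam (Br 1 j))\<^sup>2"
      using Aeq[OF i, of "Suc n"] Aeq[OF i, of n] unfolding j Aq_Suc by simp
    then have "(lam (Br i j))\<^sup>2 = (lam (Br 1 j))\<^sup>2" using Apos[OF i, of n] by simp
    moreover have "lam (Br i j) > 0" "lam (Br 1 j) > 0"
      using pos_br h one_le j by auto
    ultimately show "lam (Br i j) = lam (Br 1 j)"
      by (simp add: power2_eq_iff_nonneg)
  qed
qed

end
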